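(* There exists a constant $c>0$ depending only on $p$ and $q$ (independent of $K$ and $\sigma$; one may take $c=(q/p)^{1/(p-q)}$) such that for every $\sigma^2>0$, every $K\in(0,\infty]$ and every $W\in X_K$, $W\ne0$, solving $\sigma^2W+\mathcal{A}\Psi_q(\mathcal{A}W)=\mathcal{A}\Psi_p(\mathcal{A}W)$, one has $\|\mathcal{A}W\|_{\infty,I_K}\ge c$.
   Context: Fix $p>2$, $1<q<p$. For $K\in(0,\infty)$, $I_K=(-K,K]$ with functions identified with $2K$-periodic functions on $\mathbb{R}$; $I_\infty=\mathbb{R}$; $\|\cdot\|_{r,I_K}$ is the $L^r$ norm over $I_K$. $(\mathcal{A}W)(\varphi)=\int_{\varphi-1/2}^{\varphi+1/2}W(s)\,ds$, $\Psi_r(w)=r\,\mathrm{sgn}(w)|w|^{r-1}$, and $X_K=\{W\in L^2(I_K):\mathcal{A}W\in L^q(I_K)\cap L^p(I_K)\}$. *)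

theory Defs
  imports "HOL-Probability.Probability"
begin

definition IK :: "ereal \<Rightarrow> real set" where
  "IK K = (if K = \<infinity> then UNIV else {- real_of_ereal K <.. real_of_ereal K})"

definition avgop :: "(real \<Rightarrow> real) \<Rightarrow> real \<Rightarrow> real" where
  "avgop W \<phi> = (LBINT s:{\<phi> - 1/2 .. \<phi> + 1/2}. W s)"

definition Psi :: "real \<Rightarrow> real \<Rightarrow> real" where
  "Psi r w = r * sgn w * \<bar>w\<bar> powr (r - 1)"

definition Lp_on :: "real \<Rightarrow> real set \<Rightarrow> (real \<Rightarrow> real) \<Rightarrow> bool" where
  "Lp_on r I f \<longleftrightarrow> f \<in> borel_measurable (restrict_space lborel I)
      \<and> integrable (restrict_space lborel I) (\<lambda>x. \<bar>f x\<bar> powr r)"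

definition XK :: "real \<Rightarrow> real \<Rightarrow> ereal \<Rightarrow> (real \<Rightarrow> real) \<Rightarrow> bool" where
  "XK p q K W \<longleftrightarrow> W \<in> borel_measurable lborel
      \<and> (K \<noteq> \<infinity> \<longrightarrow> (\<forall>x. W (x + 2 * real_of_ereal K) = W x))
      \<and> Lp_on 2 (IK K) W \<and> Lp_on q (IK K) (avgop W) \<and> Lp_on p (IK K) (avgop W)"

definition sup_norm_on :: "real set \<Rightarrow> (real \<Rightarrow> real) \<Rightarrow> ereal" where
  "sup_norm_on I f = esssup (restrict_space lborel I) (\<lambda>x. ereal \<bar>f x\<bar>)"

end

theory Submission
  imports Defs
begin



lemma ind_const_integrable: "integrable lborel (\<lambda>x. indicator {a..b::real} x * (M::real))"
  using borel_integrable_atLeastAtMost[of a b "\<lambda>_. M"] by (simp add: mult.commute)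

lemma ivl_integrable_bdd:
  fixes f :: "real \<Rightarrow> real" and a b :: real
  assumes f[measurable]: "f \<in> borel_measurable borel" and b: "\<And>x. \<bar>f x\<bar> \<le> M"
  shows "set_integrable lborel {a..b} f"
  unfolding set_integrable_def
proof (rule Bochner_Integration.integrable_bound[OF ind_const_integrable[of a b M]])
  show "(\<lambda>x. indicat_real {a..b} x *\<^sub>R f x) \<in> borel_measurable lborel" by simp
  show "AE x in lborel. norm (indicat_real {a..b} x *\<^sub>R f x) \<le> norm (indicator {a..b} x * M)"
    using b by (auto split: split_indicator intro: order.trans[OF _ abs_ge_self] simp: abs_mult)
qed

lemma avg_def2: "avgop W x = (\<integral>s. indicator {x - 1/2..x + 1/2} s * W s \<partial>lborel)"
  unfolding avgop_def set_lebesgue_integral_def by simp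

lemma avg_bound:
  fixes f :: "real \<Rightarrow> real"
  assumes f[measurable]: "f \<in> borel_measurable borel" and b: "\<And>x. \<bar>f x\<bar> \<le> M"
  shows "\<bar>avgop f x\<bar> \<le> M"
proof -
  have "\<bar>avgop f x\<bar> \<le> (\<integral>s. indicator {x - 1/2..x + 1/2} s * M \<partial>lborel)"
    unfolding avg_def2
    apply (rule integral_abs_bound_integral[OF _ ind_const_integrable])
    using ivl_integrable_bdd[OF f b, of "x-1/2" "x+1/2"] 
     apply (simp add: set_integrable_def)
    using b by (auto split: split_indicator)
  also have "\<dots> = M"
    by (simp add: measure_def)
  finally show ?thesis .
qed

lemma avg_cont:
  fixes W :: "real \<Rightarrow> real"
  assumes li: "\<And>a b. set_integrable lborel {a..b} W"
  shows "continuous_on UNIV (avgop W)"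
proof (rule continuous_at_imp_continuous_on, intro ballI)
  fix x0 :: real
  have hk: "W integrable_on {a..b}" for a b using set_borel_integral_eq_integral(1)[OF li[of a b]] .
  define c where "c = x0 - 2"
  define d where "d = x0 + 2"
  define F where "F y = integral {c..y} W" for y
  have Fc: "continuous_on {c..d} F" unfolding F_def by (rule indefinite_integral_continuous_1[OF hk])
  have eq: "avgop W x = F (x + 1/2) - F (x - 1/2)" if "x \<in> {x0-1..x0+1}" for x
  proof -
    have "avgop W x = integral {x - 1/2..x + 1/2} W"
      unfolding avgop_def by (rule set_borel_integral_eq_integral(2)[OF li])
    moreover have "integral {c..x - 1/2} W + integral {x - 1/2..x + 1/2} W = integral {c..x+1/2} W"
    proof (rule Henstock_Kurzweil_Integration.integral_combine)
      show "c \<le> x - 1/2" "x - 1/2 \<le> x + 1/2" using that unfolding c_def by auto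
    qed (rule hk)
    ultimately show ?thesis unfolding F_def by linarith
  qed
  have "continuous_on {x0-1..x0+1} (\<lambda>x. F (x + 1/2) - F (x - 1/2))"
  proof (rule continuous_on_diff)
    show "continuous_on {x0-1..x0+1} (\<lambda>x. F (x + 1/2))"
      by (rule continuous_on_compose2[OF Fc continuous_on_add[OF continuous_on_id continuous_on_const]])
         (auto simp: c_def d_def)
    show "continuous_on {x0-1..x0+1} (\<lambda>x. F (x - 1/2))"
      by (rule continuous_on_compose2[OF Fc continuous_on_diff[OF continuous_on_id continuous_on_const]])
         (auto simp: c_def d_def)
  qed
  then have "continuous_on {x0-1..x0+1} (avgop W)"
    by (rule continuous_on_eq) (use eq in auto)
  then show "isCont (avgop W) x0"
    by (rule continuous_on_interior) (auto simp: interior_atLeastAtMost_real)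
qed




lemma box:
  fixes W f :: "real \<Rightarrow> real" and a b M :: real
  assumes W[measurable]: "W \<in> borel_measurable borel"
    and li: "\<And>a b. set_integrable lborel {a..b} W"
    and f[measurable]: "f \<in> borel_measurable borel" and fb: "\<And>x. \<bar>f x\<bar> \<le> M"
    and ab: "a \<le> b"
  shows "(LBINT x:{a<..b}. W x * avgop f x) \<le> (LBINT x:{a<..b}. f x * avgop W x)
          + 2*M*((LBINT x:{a-1..a+1}. \<bar>W x\<bar>) + (LBINT x:{b-1..b+1}. \<bar>W x\<bar>))"
proof -
  define k :: "real \<Rightarrow> real \<Rightarrow> real" where "k \<phi> s = (if \<phi> - 1/2 \<le> s \<and> s \<le> \<phi> + 1/2 then 1 else 0)" for \<phi> s
  have kind: "k \<phi> s = indicator {\<phi>-1/2..\<phi>+1/2} s" for \<phi> s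
    unfolding k_def by (auto split: split_indicator)
  have ksym: "k \<phi> s = k s \<phi>" for \<phi> s unfolding k_def by auto
  define G where "G \<phi> s = indicator {a<..b} \<phi> * f \<phi> * (k \<phi> s * W s)" for \<phi> s
  define f1 where "f1 \<phi> = indicator {a<..b} \<phi> * f \<phi>" for \<phi>
  have f1m[measurable]: "f1 \<in> borel_measurable borel" unfolding f1_def by simp
  have f1b: "\<bar>f1 x\<bar> \<le> M" for x using fb[of x] order.trans[OF abs_ge_zero fb[of x]]
    unfolding f1_def by (auto split: split_indicator)
  have M0: "0 \<le> M" using order.trans[OF abs_ge_zero fb] by blast
  have Gm[measurable]: "(\<lambda>(\<phi>, s). G \<phi> s) \<in> borel_measurable (lborel \<Otimes>\<^sub>M lborel)"
    unfolding G_def k_def by measurable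
  have absW: "set_integrable lborel {c..d} (\<lambda>x. \<bar>W x\<bar>)" for c d
    using set_integrable_abs[OF li] .
  have I1: "(\<integral>s. G \<phi> s \<partial>lborel) = indicator {a<..b} \<phi> * f \<phi> * avgop W \<phi>" for \<phi>
    unfolding G_def avg_def2 kind by (rule integral_mult_right_zero)
  have I2: "(\<integral>\<phi>. G \<phi> s \<partial>lborel) = W s * avgop f1 s" for s
  proof -
    have "(\<integral>\<phi>. G \<phi> s \<partial>lborel) = (\<integral>\<phi>. W s * (indicator {s-1/2..s+1/2} \<phi> * f1 \<phi>) \<partial>lborel)"
      unfolding G_def f1_def by (rule Bochner_Integration.integral_cong) (auto simp: k_def split: split_indicator)
    also have "\<dots> = W s * avgop f1 s"
      unfolding avg_def2 by (rule integral_mult_right_zero)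
    finally show ?thesis .
  qed
  have Gint: "integrable (lborel \<Otimes>\<^sub>M lborel) (\<lambda>(\<phi>, s). G \<phi> s)"
  proof (rule lborel_pair.Fubini_integrable)
    show "(\<lambda>(\<phi>, s). G \<phi> s) \<in> borel_measurable (lborel \<Otimes>\<^sub>M lborel)" by (rule Gm)
    have nG: "(\<integral>s. norm (case (\<phi>, s) of (\<phi>, s) \<Rightarrow> G \<phi> s) \<partial>lborel)
        = indicator {a<..b} \<phi> * \<bar>f \<phi>\<bar> * avgop (\<lambda>s. \<bar>W s\<bar>) \<phi>" for \<phi>
    proof -
      have "(\<integral>s. norm (case (\<phi>, s) of (\<phi>, s) \<Rightarrow> G \<phi> s) \<partial>lborel)
          = (\<integral>s. (indicator {a<..b} \<phi> * \<bar>f \<phi>\<bar>) * (indicator {\<phi>-1/2..\<phi>+1/2} s * \<bar>W s\<bar>) \<partial>lborel)"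
        unfolding G_def kind by (rule Bochner_Integration.integral_cong) (auto simp: abs_mult split: split_indicator)
      also have "\<dots> = indicator {a<..b} \<phi> * \<bar>f \<phi>\<bar> * avgop (\<lambda>s. \<bar>W s\<bar>) \<phi>"
        unfolding avg_def2 by (rule integral_mult_right_zero)
      finally show ?thesis .
    qed
    have cont: "continuous_on UNIV (avgop (\<lambda>s. \<bar>W s\<bar>))" by (rule avg_cont[OF absW])
    have avm[measurable]: "avgop (\<lambda>s. \<bar>W s\<bar>) \<in> borel_measurable borel"
      using cont by (rule borel_measurable_continuous_onI)
    define C where "C = (LBINT x:{a-1..b+1}. \<bar>W x\<bar>)"
    have avb: "avgop (\<lambda>s. \<bar>W s\<bar>) \<phi> \<le> C" if "\<phi> \<in> {a<..b}" for \<phi>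
    proof -
      have "avgop (\<lambda>s. \<bar>W s\<bar>) \<phi> = (\<integral>s. indicator {\<phi>-1/2..\<phi>+1/2} s * \<bar>W s\<bar> \<partial>lborel)" by (rule avg_def2)
      also have "\<dots> \<le> (\<integral>s. indicator {a-1..b+1} s * \<bar>W s\<bar> \<partial>lborel)"
        apply (rule integral_mono)
        using absW[of "\<phi>-1/2" "\<phi>+1/2"] absW[of "a-1" "b+1"] that by (auto simp: set_integrable_def split: split_indicator)
      also have "\<dots> = C" unfolding C_def set_lebesgue_integral_def by simp
      finally show ?thesis .
    qed
    show "integrable lborel (\<lambda>\<phi>. \<integral>s. norm (case (\<phi>, s) of (\<phi>, s) \<Rightarrow> G \<phi> s) \<partial>lborel)"
      unfolding nG
    proof (rule Bochner_Integration.integrable_bound[OF ind_const_integrable[of a b "M*C"]])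
      show "(\<lambda>x. indicat_real {a<..b} x * \<bar>f x\<bar> * avgop (\<lambda>s. \<bar>W s\<bar>) x) \<in> borel_measurable lborel"
        by simp
      show "AE x in lborel. norm (indicat_real {a<..b} x * \<bar>f x\<bar> * avgop (\<lambda>s. \<bar>W s\<bar>) x)
              \<le> norm (indicat_real {a..b} x * (M * C))"
      proof (rule AE_I2)
        fix x
        have av0: "0 \<le> avgop (\<lambda>s. \<bar>W s\<bar>) x" unfolding avg_def2
          by (rule integral_nonneg_AE) auto
        show "norm (indicat_real {a<..b} x * \<bar>f x\<bar> * avgop (\<lambda>s. \<bar>W s\<bar>) x)
              \<le> norm (indicat_real {a..b} x * (M * C))"
        proof (cases "x \<in> {a<..b}")
          case True
          have "\<bar>f x\<bar> * avgop (\<lambda>s. \<bar>W s\<bar>) x \<le> M * C"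
            by (rule mult_mono[OF fb avb[OF True] M0 av0])
          moreover have "M*C \<le> \<bar>M\<bar>*\<bar>C\<bar>" by (metis abs_ge_self abs_mult)
          ultimately show ?thesis using True av0 by (auto simp: abs_mult)
        qed auto
      qed
    qed
    show "AE \<phi> in lborel. integrable lborel (\<lambda>s. case (\<phi>, s) of (\<phi>, s) \<Rightarrow> G \<phi> s)"
    proof (rule AE_I2)
      fix \<phi>
      have "integrable lborel (\<lambda>s. (indicator {a<..b} \<phi> * f \<phi>) * (indicator {\<phi>-1/2..\<phi>+1/2} s * W s))"
        using li[of "\<phi>-1/2" "\<phi>+1/2"] unfolding set_integrable_def by simp
      then show "integrable lborel (\<lambda>s. case (\<phi>, s) of (\<phi>, s) \<Rightarrow> G \<phi> s)"
        unfolding G_def kind by (simp add: mult.assoc)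
    qed
  qed
  have Fub: "(\<integral>s. (\<integral>\<phi>. G \<phi> s \<partial>lborel) \<partial>lborel) = (\<integral>\<phi>. (\<integral>s. G \<phi> s \<partial>lborel) \<partial>lborel)"
    using lborel_pair.Fubini_integral[OF Gint] .
  have intsnd: "integrable lborel (\<lambda>s. \<integral>\<phi>. G \<phi> s \<partial>lborel)" using lborel_pair.integrable_snd[OF Gint] .
  hence intWf1: "integrable lborel (\<lambda>s. W s * avgop f1 s)" unfolding I2 .
  have eq1: "(\<integral>s. W s * avgop f1 s \<partial>lborel) = (LBINT x:{a<..b}. f x * avgop W x)"
    using Fub unfolding I1 I2 set_lebesgue_integral_def by (simp add: mult.assoc)
  have Afc: "continuous_on UNIV (avgop f)" by (rule avg_cont[OF ivl_integrable_bdd[OF f fb]])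
  have Af1c: "continuous_on UNIV (avgop f1)" by (rule avg_cont[OF ivl_integrable_bdd[OF f1m f1b]])
  have Afm[measurable]: "avgop f \<in> borel_measurable borel" using Afc by (rule borel_measurable_continuous_onI)
  have Af1m[measurable]: "avgop f1 \<in> borel_measurable borel" using Af1c by (rule borel_measurable_continuous_onI)
  have Afb: "\<bar>avgop f s\<bar> \<le> M" for s by (rule avg_bound[OF f fb])
  have Af1b: "\<bar>avgop f1 s\<bar> \<le> M" for s by (rule avg_bound[OF f1m f1b])
  define D where "D s = W s * (indicator {a<..b} s * avgop f s - avgop f1 s)" for s
  define R where "R s = 2*M*(indicator {a-1..a+1} s * \<bar>W s\<bar> + indicator {b-1..b+1} s * \<bar>W s\<bar>)" for s
  have Dbound: "\<bar>D s\<bar> \<le> R s" for s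
  proof -
    have R0: "0 \<le> R s" unfolding R_def using M0 by auto
    consider (A) "a + 1/2 < s \<and> s \<le> b - 1/2" | (B) "s < a - 1/2 \<or> b + 1/2 < s"
      | (C) "s \<in> {a-1..a+1} \<or> s \<in> {b-1..b+1}" by force
    then show ?thesis
    proof cases
      case A
      have "avgop f1 s = avgop f s" unfolding avg_def2 f1_def
        by (rule Bochner_Integration.integral_cong) (use A in \<open>auto split: split_indicator\<close>)
      then have "D s = 0" unfolding D_def using A by auto
      then show ?thesis using R0 by simp
    next
      case B
      have "avgop f1 s = 0" unfolding avg_def2 f1_def
        by (rule integral_eq_zero_AE, rule AE_I2) (use B ab in \<open>auto split: split_indicator\<close>)
      then have "D s = 0" unfolding D_def using B ab by (auto split: split_indicator)
      then show ?thesis using R0 by simp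
    next
      case C
      have ind: "\<bar>indicator {a<..b} s * avgop f s\<bar> \<le> M"
        using Afb[of s] M0 by (auto split: split_indicator)
      have "\<bar>indicator {a<..b} s * avgop f s - avgop f1 s\<bar> \<le> 2 * M"
        using ind Af1b[of s] by linarith
      then have "\<bar>D s\<bar> \<le> \<bar>W s\<bar> * (2 * M)" unfolding D_def abs_mult
        by (rule mult_left_mono) simp
      also have "\<dots> \<le> R s" unfolding R_def using C M0
        by (auto split: split_indicator simp: algebra_simps)
      finally show ?thesis .
    qed
  qed
  have intR: "integrable lborel R"
    unfolding R_def using absW[of "a-1" "a+1"] absW[of "b-1" "b+1"]
    by (auto simp: set_integrable_def)
  have Dm[measurable]: "D \<in> borel_measurable lborel" unfolding D_def by simp
  have intD: "integrable lborel D"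
    by (rule Bochner_Integration.integrable_bound[OF intR Dm]) (use Dbound in \<open>auto intro!: AE_I2 order.trans[OF _ abs_ge_self]\<close>)
  have "(LBINT x:{a<..b}. W x * avgop f x) = (\<integral>s. W s * avgop f1 s + D s \<partial>lborel)"
    unfolding set_lebesgue_integral_def D_def by (rule Bochner_Integration.integral_cong) (auto simp: algebra_simps)
  also have "\<dots> = (\<integral>s. W s * avgop f1 s \<partial>lborel) + (\<integral>s. D s \<partial>lborel)"
    by (rule Bochner_Integration.integral_add[OF intWf1 intD])
  also have "(\<integral>s. D s \<partial>lborel) \<le> (\<integral>s. R s \<partial>lborel)"
    by (rule integral_mono[OF intD intR]) (use Dbound in \<open>auto intro: order.trans[OF abs_ge_self]\<close>)
  also have "(\<integral>s. R s \<partial>lborel) = 2*M*((LBINT x:{a-1..a+1}. \<bar>W x\<bar>) + (LBINT x:{b-1..b+1}. \<bar>W x\<bar>))"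
    unfolding R_def set_lebesgue_integral_def
    using absW[of "a-1" "a+1"] absW[of "b-1" "b+1"]
    by (simp add: set_integrable_def)
  finally show ?thesis unfolding eq1 by simp
qed



lemma shift_oc:
  fixes F :: "real \<Rightarrow> real"
  assumes per: "\<And>x. F (x + t) = F x"
  shows "(LBINT x:{a+t<..b+t}. F x) = (LBINT x:{a<..b}. F x)"
    and "set_integrable lborel {a+t<..b+t} F \<longleftrightarrow> set_integrable lborel {a<..b} F"
proof -
  have e: "indicator {a+t<..b+t} (t + x) * F (t + x) = indicator {a<..b} x * F x" for x
    using per[of x] by (auto simp: add.commute split: split_indicator)
  show "(LBINT x:{a+t<..b+t}. F x) = (LBINT x:{a<..b}. F x)"
    unfolding set_lebesgue_integral_def
    using lborel_integral_real_affine[of 1 "\<lambda>x. indicator {a+t<..b+t} x * F x" t] by (simp add: e)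
  show "set_integrable lborel {a+t<..b+t} F \<longleftrightarrow> set_integrable lborel {a<..b} F"
    unfolding set_integrable_def
    using lborel_integrable_real_affine_iff[of 1 "\<lambda>x. indicator {a+t<..b+t} x * F x" t] by (simp add: e)
qed

lemma shift_cc:
  fixes F :: "real \<Rightarrow> real"
  assumes per: "\<And>x. F (x + t) = F x"
  shows "(LBINT x:{a+t..b+t}. F x) = (LBINT x:{a..b}. F x)"
proof -
  have e: "indicator {a+t..b+t} (t + x) * F (t + x) = indicator {a..b} x * F x" for x
    using per[of x] by (auto simp: add.commute split: split_indicator)
  show ?thesis
    unfolding set_lebesgue_integral_def
    using lborel_integral_real_affine[of 1 "\<lambda>x. indicator {a+t..b+t} x * F x" t] by (simp add: e)
qed

lemma per_nat:
  fixes F :: "real \<Rightarrow> 'b"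
  assumes per: "\<And>x. F (x + L) = F x"
  shows "F (x + real n * L) = F x"
proof (induction n)
  case (Suc n)
  have "F (x + real (Suc n) * L) = F ((x + real n * L) + L)" by (simp add: algebra_simps)
  then show ?case using per Suc by simp
qed simp

lemma per_int:
  fixes F :: "real \<Rightarrow> 'b"
  assumes per: "\<And>x. F (x + L) = F x"
  shows "F (x + real_of_int m * L) = F x"
proof (cases "m \<ge> 0")
  case True
  then obtain n where "m = int n" by (metis nonneg_eq_int)
  then show ?thesis using per_nat[of F L, OF per] by simp
next
  case False
  define n where "n = nat (-m)"
  have n: "m = - int n" using False by (simp add: n_def)
  have "F ((x - real n * L) + real n * L) = F (x - real n * L)" by (rule per_nat[of F L, OF per])
  then show ?thesis using n by simp
qed



lemma nperiod:
  fixes F :: "real \<Rightarrow> real"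
  assumes per: "\<And>x. F (x + L) = F x" and L: "L > 0"
    and int: "set_integrable lborel {a<..a+L} F"
  shows "set_integrable lborel {a<..a + real n * L} F \<and>
         (LBINT x:{a<..a + real n * L}. F x) = real n * (LBINT x:{a<..a+L}. F x)"
proof (induction n)
  case 0
  then show ?case by (simp add: set_lebesgue_integral_def)
next
  case (Suc n)
  have pn: "\<And>x. F (x + real n * L) = F x" by (rule per_nat[of F L, OF per])
  have sh1: "set_integrable lborel {a + real n * L<..a + L + real n * L} F"
    by (rule iffD2[OF shift_oc(2)[of F "real n * L" a "a+L", OF pn] int])
  have sh2: "(LBINT x:{a + real n * L<..a + L + real n * L}. F x) = (LBINT x:{a<..a+L}. F x)"
    by (rule shift_oc(1)[of F "real n * L" a "a+L", OF pn])
  note sh = sh1 sh2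
  have un: "{a<..a + real (Suc n) * L} = {a<..a + real n * L} \<union> {a + real n * L<..a + L + real n * L}"
  proof -
    define t where "t = real n * L"
    have t0: "0 \<le> t" using L unfolding t_def by simp
    have e: "a + real (Suc n) * L = a + L + t" unfolding t_def by (simp add: algebra_simps)
    have "{a<..a + L + t} = {a<..a + t} \<union> {a + t<..a + L + t}" using t0 L by auto
    then show ?thesis unfolding e t_def .
  qed
  have dis: "{a<..a + real n * L} \<inter> {a + real n * L<..a + L + real n * L} = {}" by auto
  have i1: "set_integrable lborel {a<..a + real n * L} F" and e1: "(LBINT x:{a<..a + real n * L}. F x) = real n * (LBINT x:{a<..a+L}. F x)"
    using Suc by auto
  have I: "set_integrable lborel ({a<..a + real n * L} \<union> {a + real n * L<..a + L + real n * L}) F"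
    by (rule set_integrable_Un[OF i1 sh(1)]) auto
  have U: "(LBINT x:({a<..a + real n * L} \<union> {a + real n * L<..a + L + real n * L}). F x)
     = real (Suc n) * (LBINT x:{a<..a+L}. F x)"
  proof -
    have "(LBINT x:({a<..a + real n * L} \<union> {a + real n * L<..a + L + real n * L}). F x)
     = (LBINT x:{a<..a + real n * L}. F x) + (LBINT x:{a + real n * L<..a + L + real n * L}. F x)"
      by (rule set_integral_Un[OF dis i1 sh(1)])
    also have "\<dots> = real n * (LBINT x:{a<..a+L}. F x) + (LBINT x:{a<..a+L}. F x)"
      by (simp only: e1 sh(2))
    also have "\<dots> = real (Suc n) * (LBINT x:{a<..a+L}. F x)"
      by (simp add: distrib_right)
    finally show ?thesis .
  qed
  show ?case unfolding un by (rule conjI[OF I U])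
qed



lemma per_locint:
  fixes F :: "real \<Rightarrow> real"
  assumes per: "\<And>x. F (x + L) = F x" and L: "L > 0"
    and int: "set_integrable lborel {a<..a+L} F"
  shows "set_integrable lborel {c..d} F"
proof -
  obtain N :: nat where N: "real N > (a - c) / L" using reals_Archimedean2 by blast
  define a' where "a' = a - real N * L"
  have a'c: "a' < c" using N L unfolding a'_def by (simp add: field_simps)
  obtain n :: nat where n: "real n > (d - a') / L" using reals_Archimedean2 by blast
  have "d < a' + real n * L" using n L by (simp add: field_simps)
  have int': "set_integrable lborel {a'<..a'+L} F"
  proof -
    have "set_integrable lborel {a' + real N * L<..a' + L + real N * L} F"
      using int unfolding a'_def by (simp add: algebra_simps)
    then show ?thesis using shift_oc(2)[of F "real N * L" a' "a'+L", OF per_nat[of F L, OF per]] by simp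
  qed
  have "set_integrable lborel {a'<..a' + real n * L} F"
    using nperiod[OF per L int'] by blast
  then show ?thesis
    by (rule set_integrable_subset) (use a'c \<open>d < a' + real n * L\<close> in auto)
qed



lemma ae_to_all:
  fixes g :: "real \<Rightarrow> real"
  assumes g: "continuous_on UNIV g" and ae: "AE x in lborel. x \<in> {u<..v} \<longrightarrow> g x \<le> c" and uv: "u < v"
    and x0: "x0 \<in> {u..v}"
  shows "g x0 \<le> c"
proof (rule ccontr)
  assume "\<not> g x0 \<le> c"
  then have gt: "g x0 > c" by simp
  have "isCont g x0" using g by (simp add: continuous_on_eq_continuous_at)
  then obtain \<delta> where d0: "\<delta> > 0" and d: "\<And>y. dist y x0 < \<delta> \<Longrightarrow> dist (g y) (g x0) < g x0 - c"
    using gt unfolding continuous_at_eps_delta by (metis diff_gt_0_iff_gt)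
  define l where "l = max u (x0 - \<delta>)"
  define r where "r = min v (x0 + \<delta>)"
  have lr: "l < r" using uv x0 d0 unfolding l_def r_def by auto
  have sub: "{l<..<r} \<subseteq> {u<..v}" unfolding l_def r_def by auto
  have big: "g y > c" if "y \<in> {l<..<r}" for y
  proof -
    have "dist y x0 < \<delta>" using that unfolding l_def r_def dist_real_def by auto
    from d[OF this] show ?thesis unfolding dist_real_def by auto
  qed
  have "AE x in lborel. x \<notin> {l<..<r}"
    using ae by eventually_elim (use sub big in force)
  then have "emeasure lborel {l<..<r} = 0"
  proof -
    have s: "{x \<in> space lborel. \<not> (x \<notin> {l<..<r})} = {l<..<r}" by auto
    show ?thesis using AE_iff_measurable[of "{l<..<r}" lborel, OF _ s] \<open>AE x in lborel. x \<notin> {l<..<r}\<close> by simp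
  qed
  moreover have "emeasure lborel {l<..<r} = ennreal (r - l)" using lr by simp
  ultimately have "ennreal (r - l) = 0" by simp
  then show False using lr by (simp add: ennreal_eq_0_iff)
qed




lemma psi_mul: "Psi r u * u = r * \<bar>u\<bar> powr r" if "r > 1" for r u :: real
proof (cases "u = 0")
  case True then show ?thesis using that by (simp add: Psi_def)
next
  case False
  have "\<bar>u\<bar> powr (r - 1) * \<bar>u\<bar> = \<bar>u\<bar> powr r"
    using False powr_add[of "\<bar>u\<bar>" "r-1" 1] by simp
  moreover have "sgn u * u = \<bar>u\<bar>" by (simp add: sgn_mult_self_eq abs_sgn mult.commute)
  ultimately show ?thesis unfolding Psi_def
    by (metis (no_types, lifting) mult.assoc mult.commute)
qed

lemma psi_abs: "\<bar>Psi r u\<bar> \<le> r * c powr (r - 1)" if "r > 1" "\<bar>u\<bar> \<le> c" for r u c :: real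
proof -
  have "\<bar>Psi r u\<bar> \<le> r * \<bar>u\<bar> powr (r - 1)"
    using that unfolding Psi_def by (auto simp: abs_mult abs_sgn_eq)
  also have "\<dots> \<le> r * c powr (r - 1)"
    using that by (intro mult_left_mono powr_mono2) auto
  finally show ?thesis .
qed

lemma psi_meas[measurable]:
  assumes [measurable]: "g \<in> borel_measurable M"
  shows "(\<lambda>x. Psi r (g x)) \<in> borel_measurable M"
  unfolding Psi_def by measurable

lemma sq_powr: "\<bar>w\<bar> powr 2 = w * (w::real)"
  by (cases "w = 0") (simp_all add: powr_numeral power2_eq_square[symmetric])

lemma key_sign:
  fixes p q u :: real
  assumes "q > 1" "q < p" and u: "\<bar>u\<bar> \<le> (q/p) powr (1/(p-q))"
  shows "(Psi p u - Psi q u) * u \<le> 0"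
proof (cases "u = 0")
  case True then show ?thesis by (simp add: Psi_def)
next
  case False
  have p1: "p > 1" using assms by simp
  have e: "(Psi p u - Psi q u) * u = p * \<bar>u\<bar> powr p - q * \<bar>u\<bar> powr q"
    using psi_mul[OF p1, of u] psi_mul[OF assms(1), of u] by (simp add: left_diff_distrib)
  have up: "\<bar>u\<bar> powr p = \<bar>u\<bar> powr q * \<bar>u\<bar> powr (p - q)"
    using False powr_add[of "\<bar>u\<bar>" q "p-q"] by simp
  have "\<bar>u\<bar> powr (p - q) \<le> ((q/p) powr (1/(p-q))) powr (p - q)"
    using assms by (intro powr_mono2) auto
  also have "\<dots> = q / p"
    using assms by (simp add: powr_powr)
  finally have b: "\<bar>u\<bar> powr (p - q) \<le> q / p" .
  have "p * \<bar>u\<bar> powr p = \<bar>u\<bar> powr q * (p * \<bar>u\<bar> powr (p - q))" unfolding up by simp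
  also have "\<dots> \<le> \<bar>u\<bar> powr q * (p * (q/p))"
    using b p1 by (intro mult_left_mono) auto
  also have "\<dots> = q * \<bar>u\<bar> powr q" using p1 by simp
  finally show ?thesis unfolding e by simp
qed




lemma sq_loc:
  fixes W :: "real \<Rightarrow> real"
  assumes Wm[measurable]: "W \<in> borel_measurable borel"
    and S: "set_integrable lborel S (\<lambda>x. W x * W x)" and Sm[measurable]: "S \<in> sets borel"
  shows "set_integrable lborel (S \<inter> {a..b}) W"
proof -
  have i1: "integrable lborel (\<lambda>x. indicator {a..b} x * (1::real))" by (rule ind_const_integrable)
  have i2: "integrable lborel (\<lambda>x. indicator S x * (W x * W x))" using S unfolding set_integrable_def by simp
  have pw: "\<bar>w\<bar> \<le> 1 + w * w" for w :: real
  proof -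
    have h1: "0 \<le> (\<bar>w\<bar> - 1/2) * (\<bar>w\<bar> - 1/2)" by simp
    then have h1': "0 \<le> \<bar>w\<bar>*\<bar>w\<bar> - \<bar>w\<bar> + 1/4" by (simp add: algebra_simps)
    have h2: "\<bar>w\<bar> * \<bar>w\<bar> = w * w" by (rule abs_mult_self_eq)
    show ?thesis using h1' h2 by linarith
  qed
  show ?thesis
    unfolding set_integrable_def
  proof (rule Bochner_Integration.integrable_bound[OF Bochner_Integration.integrable_add[OF i1 i2]])
    show "(\<lambda>x. indicat_real (S \<inter> {a..b}) x *\<^sub>R W x) \<in> borel_measurable lborel" by simp
    show "AE x in lborel. norm (indicat_real (S \<inter> {a..b}) x *\<^sub>R W x) \<le> norm (indicat_real {a..b} x * 1 + indicat_real S x * (W x * W x))"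
    proof (rule AE_I2)
      fix x
      have "0 \<le> W x * W x" by simp
      then show "norm (indicat_real (S \<inter> {a..b}) x *\<^sub>R W x) \<le> norm (indicat_real {a..b} x * 1 + indicat_real S x * (W x * W x))"
        using pw[of "W x"] by (auto split: split_indicator)
    qed
  qed
qed

lemma avg_per:
  fixes F :: "real \<Rightarrow> real"
  assumes per: "\<And>x. F (x + L) = F x"
  shows "avgop F (x + L) = avgop F x"
proof -
  have "avgop F (x + L) = (LBINT s:{(x - 1/2) + L..(x + 1/2) + L}. F s)"
    unfolding avgop_def by (simp add: algebra_simps)
  also have "\<dots> = avgop F x" unfolding avgop_def by (rule shift_cc[of F L, OF per])
  finally show ?thesis .
qed




lemma abs_le_eps: "\<bar>w\<bar> \<le> e + w * w / (4 * e)" if e: "e > 0" for w e :: real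
proof -
  have h1: "0 \<le> (\<bar>w\<bar> - 2*e) * (\<bar>w\<bar> - 2*e)" by simp
  then have h1': "4*e*\<bar>w\<bar> \<le> \<bar>w\<bar>*\<bar>w\<bar> + 4*e*e" by (simp add: algebra_simps)
  have h2: "\<bar>w\<bar> * \<bar>w\<bar> = w * w" by (rule abs_mult_self_eq)
  have "4*e*\<bar>w\<bar> \<le> 4*e*(e + w * w / (4 * e))" using h1' h2 e by (simp add: algebra_simps)
  then show ?thesis using e by simp
qed

lemma T_bound:
  fixes W :: "real \<Rightarrow> real"
  assumes Wm[measurable]: "W \<in> borel_measurable borel"
    and li: "set_integrable lborel {a..b} W"
    and l2: "set_integrable lborel {a..b} (\<lambda>x. W x * W x)"
    and e: "e > 0" and ab: "a \<le> b"
  shows "(LBINT x:{a..b}. \<bar>W x\<bar>) \<le> e * (b - a) + (LBINT x:{a..b}. W x * W x) / (4*e)"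
proof -
  have ci: "set_integrable lborel {a..b} (\<lambda>_. e)"
    by (rule ivl_integrable_bdd[where M="\<bar>e\<bar>"]) auto
  have di: "set_integrable lborel {a..b} (\<lambda>x. W x * W x / (4*e))"
    using l2 by (rule set_integrable_divide)
  have "(LBINT x:{a..b}. \<bar>W x\<bar>) \<le> (LBINT x:{a..b}. e + W x * W x / (4*e))"
    by (rule set_integral_mono[OF set_integrable_abs[OF li] set_integral_add(1)[OF ci di]])
       (rule abs_le_eps[OF e])
  also have "\<dots> = (LBINT x:{a..b}. e) + (LBINT x:{a..b}. W x * W x / (4*e))"
    by (rule set_integral_add(2)[OF ci di])
  also have "(LBINT x:{a..b}. e) = e * (b - a)"
    using ab by (simp add: set_lebesgue_integral_def measure_def mult.commute)
  also have "(LBINT x:{a..b}. W x * W x / (4*e)) = (LBINT x:{a..b}. W x * W x) / (4*e)"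
    by (rule set_integral_divide_zero)
  finally show ?thesis .
qed

theorem mainTheorem8:
  fixes p q :: real
  assumes "p > 2" and "1 < q" and "q < p"
  shows "\<exists>c>0. \<forall>(\<sigma>::real) (K::ereal) (W::real \<Rightarrow> real).
           \<sigma>\<^sup>2 > 0 \<longrightarrow> K > 0 \<longrightarrow> XK p q K W
           \<longrightarrow> \<not> (AE x in restrict_space lborel (IK K). W x = 0)
           \<longrightarrow> (AE x in restrict_space lborel (IK K).
                 \<sigma>\<^sup>2 * W x + avgop (\<lambda>y. Psi q (avgop W y)) x = avgop (\<lambda>y. Psi p (avgop W y)) x)
           \<longrightarrow> sup_norm_on (IK K) (avgop W) \<ge> ereal c"
proof -
  define c where "c = (q/p) powr (1/(p-q))"
  have c0: "c > 0" using assms by (simp add: c_def)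
  have p1: "p > 1" and q1: "q > 1" using assms by auto
  show ?thesis
  proof (intro exI[of _ c] conjI allI impI)
    show "c > 0" by (rule c0)
    fix \<sigma> :: real and K :: ereal and W :: "real \<Rightarrow> real"
    assume s2: "\<sigma>\<^sup>2 > 0" and K0: "K > 0" and X: "XK p q K W"
      and nz: "\<not> (AE x in restrict_space lborel (IK K). W x = 0)"
      and eqn: "AE x in restrict_space lborel (IK K).
                 \<sigma>\<^sup>2 * W x + avgop (\<lambda>y. Psi q (avgop W y)) x = avgop (\<lambda>y. Psi p (avgop W y)) x"
    show "sup_norm_on (IK K) (avgop W) \<ge> ereal c"
    proof (rule ccontr)
      assume "\<not> sup_norm_on (IK K) (avgop W) \<ge> ereal c"
      then have lt: "sup_norm_on (IK K) (avgop W) < ereal c" by simp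
      have Wm[measurable]: "W \<in> borel_measurable borel" using X unfolding XK_def by simp
      have L2: "integrable (restrict_space lborel (IK K)) (\<lambda>x. \<bar>W x\<bar> powr 2)"
        using X unfolding XK_def Lp_on_def by simp
      have IKm[measurable]: "IK K \<in> sets borel" unfolding IK_def by auto
      have IKm': "IK K \<inter> space lborel \<in> sets lborel" by simp
      have L2': "set_integrable lborel (IK K) (\<lambda>x. W x * W x)"
        using L2 unfolding set_integrable_def integrable_restrict_space[OF IKm'] sq_powr .
      have J0: "integral\<^sup>L (restrict_space lborel (IK K)) (\<lambda>x. \<bar>W x\<bar> powr 2) = (LBINT x:IK K. W x * W x)"
        unfolding integral_restrict_space[OF IKm'] sq_powr set_lebesgue_integral_def ..
      have final: False if J: "(LBINT x:IK K. W x * W x) \<le> 0"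
      proof -
        have "integral\<^sup>L (restrict_space lborel (IK K)) (\<lambda>x. \<bar>W x\<bar> powr 2) \<le> 0" using J J0 by simp
        moreover have "0 \<le> integral\<^sup>L (restrict_space lborel (IK K)) (\<lambda>x. \<bar>W x\<bar> powr 2)"
          by (rule integral_nonneg_AE) simp
        ultimately have "integral\<^sup>L (restrict_space lborel (IK K)) (\<lambda>x. \<bar>W x\<bar> powr 2) = 0" by (rule antisym)
        then have "AE x in restrict_space lborel (IK K). \<bar>W x\<bar> powr 2 = 0"
          using integral_nonneg_eq_0_iff_AE[OF L2] by simp
        then have "AE x in restrict_space lborel (IK K). W x = 0"
          by eventually_elim simp
        then show False using nz by simp
      qed
      have aeb0: "AE x in restrict_space lborel (IK K). ereal \<bar>avgop W x\<bar> \<le> sup_norm_on (IK K) (avgop W)"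
        unfolding sup_norm_on_def by (rule esssup_AE)
      have aeb: "AE x in restrict_space lborel (IK K). \<bar>avgop W x\<bar> \<le> c"
        using aeb0
      proof eventually_elim
        case (elim x)
        have "ereal \<bar>avgop W x\<bar> < ereal c" by (rule order.strict_trans1[OF elim lt])
        then show ?case by simp
      qed
      have aeb': "AE x in lborel. x \<in> IK K \<longrightarrow> \<bar>avgop W x\<bar> \<le> c"
        using aeb unfolding AE_restrict_space_iff[OF IKm'] .
      have eqn': "AE x in lborel. x \<in> IK K \<longrightarrow> \<sigma>\<^sup>2 * W x + avgop (\<lambda>y. Psi q (avgop W y)) x = avgop (\<lambda>y. Psi p (avgop W y)) x"
        using eqn unfolding AE_restrict_space_iff[OF IKm'] .
      consider (inf) "K = \<infinity>" | (fin) k where "K = ereal k" "k > 0"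
        using K0 by (cases K) auto
      note Kcases = this
      have li: "set_integrable lborel {a..b} W" for a b
      proof (cases rule: Kcases)
        case inf
        then have "set_integrable lborel (UNIV \<inter> {a..b}) W"
          using sq_loc[OF Wm, of UNIV] L2' unfolding IK_def by simp
        then show ?thesis by simp
      next
        case (fin k)
        have I: "IK K = {-k<..k}" using fin unfolding IK_def by simp
        have per: "W (x + 2*k) = W x" for x using X fin unfolding XK_def by simp
        have "set_integrable lborel ({-k<..k} \<inter> {-k..k}) W"
          using sq_loc[OF Wm, of "{-k<..k}"] L2' I by simp
        then have "set_integrable lborel {-k<..-k + 2*k} W"
          by (simp add: Int_absorb2 subset_eq)
        moreover have "0 < 2*k" using fin by simp
        ultimately show ?thesis using per_locint[of W "2*k" "-k" a b, OF per] by blast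
      qed
      have AWc: "continuous_on UNIV (avgop W)" by (rule avg_cont[OF li])
      have AWm[measurable]: "avgop W \<in> borel_measurable borel"
        using AWc by (rule borel_measurable_continuous_onI)
      have absc: "continuous_on UNIV (\<lambda>x. \<bar>avgop W x\<bar>)"
        using AWc by (intro continuous_intros)
      have bnd: "\<bar>avgop W x\<bar> \<le> c" for x
      proof (cases rule: Kcases)
        case inf
        show ?thesis
          by (rule ae_to_all[OF absc _ _, of "x-1" "x+1"]) (use aeb' inf in \<open>auto simp: IK_def\<close>)
      next
        case (fin k)
        have I: "IK K = {-k<..k}" using fin unfolding IK_def by simp
        have per: "W (x + 2*k) = W x" for x using X fin unfolding XK_def by simp
        have aper: "avgop W (x + 2*k) = avgop W x" for x by (rule avg_per[of W "2*k", OF per])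
        have inb: "\<bar>avgop W y\<bar> \<le> c" if "y \<in> {-k..k}" for y
          by (rule ae_to_all[OF absc _ _ that]) (use aeb' I fin in auto)
        define m where "m = \<lfloor>(x + k) / (2*k)\<rfloor>"
        define y where "y = x - real_of_int m * (2*k)"
        have m1: "real_of_int m \<le> (x + k) / (2*k)" unfolding m_def by (rule of_int_floor_le)
        have m2: "(x + k) / (2*k) < real_of_int m + 1" unfolding m_def by (rule real_of_int_floor_add_one_gt)
        have "real_of_int m * (2*k) \<le> x + k" using m1 fin by (simp add: field_simps)
        moreover have "x + k < (real_of_int m + 1) * (2*k)" using m2 fin by (simp add: field_simps)
        ultimately have yin: "y \<in> {-k..k}" unfolding y_def by (auto simp: algebra_simps)
        have "avgop W (y + real_of_int m * (2*k)) = avgop W y"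
          by (rule per_int[of "avgop W" "2*k", OF aper])
        then have "avgop W x = avgop W y" unfolding y_def by simp
        then show ?thesis using inb[OF yin] by simp
      qed
      define h where "h x = Psi p (avgop W x) - Psi q (avgop W x)" for x
      define Mh where "Mh = p * c powr (p-1) + q * c powr (q-1)"
      have hm[measurable]: "h \<in> borel_measurable borel" unfolding h_def by measurable
      have psb: "\<bar>Psi r (avgop W x)\<bar> \<le> r * c powr (r-1)" if "r > 1" for r x
        by (rule psi_abs[OF that bnd])
      have hb: "\<bar>h x\<bar> \<le> Mh" for x
        using psb[OF p1, of x] psb[OF q1, of x] unfolding h_def Mh_def by linarith
      have Mh0: "Mh > 0" using p1 q1 c0 unfolding Mh_def by (simp add: add_pos_pos)
      have hs: "h x * avgop W x \<le> 0" for x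
        unfolding h_def c_def by (rule key_sign[OF q1 assms(3) bnd[unfolded c_def]])
      have Ahc: "continuous_on UNIV (avgop h)" by (rule avg_cont[OF ivl_integrable_bdd[OF hm hb]])
      have Ahm[measurable]: "avgop h \<in> borel_measurable borel"
        using Ahc by (rule borel_measurable_continuous_onI)
      have lin: "avgop (\<lambda>y. Psi p (avgop W y)) x - avgop (\<lambda>y. Psi q (avgop W y)) x = avgop h x" for x
      proof -
        have ip: "integrable lborel (\<lambda>s. indicator {x - 1/2..x + 1/2} s * Psi p (avgop W s))"
          using ivl_integrable_bdd[where a="x-1/2" and b="x+1/2", OF _ psb[OF p1]] unfolding set_integrable_def by simp
        have iq: "integrable lborel (\<lambda>s. indicator {x - 1/2..x + 1/2} s * Psi q (avgop W s))"
          using ivl_integrable_bdd[where a="x-1/2" and b="x+1/2", OF _ psb[OF q1]] unfolding set_integrable_def by simp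
        show ?thesis
          using Bochner_Integration.integral_diff[OF ip iq] avg_def2[of "\<lambda>y. Psi p (avgop W y)" x]
            avg_def2[of "\<lambda>y. Psi q (avgop W y)" x] avg_def2[of h x]
          unfolding h_def by (simp add: right_diff_distrib)
      qed
      have eqA: "AE x in lborel. x \<in> IK K \<longrightarrow> W x * avgop h x = \<sigma>\<^sup>2 * (W x * W x)"
        using eqn' by eventually_elim (use lin in \<open>auto simp: algebra_simps\<close>)
      have absW: "set_integrable lborel {a..b} (\<lambda>x. \<bar>W x\<bar>)" for a b using set_integrable_abs[OF li] .
      define T where "T a = (LBINT x:{a-1..a+1}. \<bar>W x\<bar>)" for a
      have star: "(LBINT x:{a<..b}. W x * avgop h x) \<le> 2*Mh*(T a + T b)" if ab: "a \<le> b" for a b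
      proof -
        have "(LBINT x:{a<..b}. W x * avgop h x) \<le> (LBINT x:{a<..b}. h x * avgop W x) + 2*Mh*(T a + T b)"
          unfolding T_def by (rule box[OF Wm li hm hb ab])
        moreover have "(LBINT x:{a<..b}. h x * avgop W x) \<le> 0"
        proof -
          have "0 \<le> (\<integral>x. - (indicator {a<..b} x *\<^sub>R (h x * avgop W x)) \<partial>lborel)"
            by (rule integral_nonneg_AE, rule AE_I2) (use hs in \<open>auto split: split_indicator\<close>)
          then show ?thesis unfolding set_lebesgue_integral_def by simp
        qed
        ultimately show ?thesis by linarith
      qed
      show False
      proof (cases rule: Kcases)
        case inf
        have I: "IK K = UNIV" using inf unfolding IK_def by simp
        have W2: "integrable lborel (\<lambda>x. W x * W x)" using L2' I unfolding set_integrable_def by simp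
        have eqA2: "AE x in lborel. W x * avgop h x = \<sigma>\<^sup>2 * (W x * W x)" using eqA I by simp
        define S where "S n = (LBINT x:{-real n<..real n}. W x * W x)" for n :: nat
        define Itot where "Itot = (\<integral>x. W x * W x \<partial>lborel)"
        have l2: "set_integrable lborel A (\<lambda>x. W x * W x)" if "A \<in> sets borel" for A
          using W2 that unfolding set_integrable_def by (intro integrable_mult_indicator) auto
        have Sn: "\<sigma>\<^sup>2 * S n \<le> 2*Mh*(T (-real n) + T (real n))" for n
        proof -
          have "(LBINT x:{-real n<..real n}. W x * avgop h x) = (LBINT x:{-real n<..real n}. \<sigma>\<^sup>2 * (W x * W x))"
            by (rule set_lebesgue_integral_cong_AE) (use eqA2 in auto)
          then have "(LBINT x:{-real n<..real n}. W x * avgop h x) = \<sigma>\<^sup>2 * S n" unfolding S_def by simp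
          moreover have "(LBINT x:{-real n<..real n}. W x * avgop h x) \<le> 2*Mh*(T (-real n) + T (real n))"
            by (rule star) simp
          ultimately show ?thesis by simp
        qed
        have Tb: "T a \<le> e * 2 + (LBINT x:{a-1..a+1}. W x * W x) / (4*e)" if "e > 0" for a e
          using T_bound[OF Wm li l2 that, of "a-1" "a+1"] unfolding T_def by simp
        have disj: "(LBINT x:{-a-1..-a+1}. W x * W x) + (LBINT x:{a-1..a+1}. W x * W x) + S n \<le> Itot"
          if a: "a = real n + 2" for a n
        proof -
          have "(LBINT x:{-a-1..-a+1}. W x * W x) + (LBINT x:{a-1..a+1}. W x * W x) + S n
              = (\<integral>x. indicator {-a-1..-a+1} x * (W x * W x) + indicator {a-1..a+1} x * (W x * W x)
                   + indicator {-real n<..real n} x * (W x * W x) \<partial>lborel)"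
            unfolding S_def set_lebesgue_integral_def
            using l2[of "{-a-1..-a+1}"] l2[of "{a-1..a+1}"] l2[of "{-real n<..real n}"]
            unfolding set_integrable_def by simp
          also have "\<dots> \<le> Itot" unfolding Itot_def
          proof (rule integral_mono)
            show "integrable lborel (\<lambda>x. indicator {-a-1..-a+1} x * (W x * W x) + indicator {a-1..a+1} x * (W x * W x)
                   + indicator {-real n<..real n} x * (W x * W x))"
              using l2[of "{-a-1..-a+1}"] l2[of "{a-1..a+1}"] l2[of "{-real n<..real n}"]
              unfolding set_integrable_def by simp
            show "integrable lborel (\<lambda>x. W x * W x)" by (rule W2)
            fix x
            have w0: "0 \<le> W x * W x" by simp
            show "indicator {-a-1..-a+1} x * (W x * W x) + indicator {a-1..a+1} x * (W x * W x)
                   + indicator {-real n<..real n} x * (W x * W x) \<le> W x * W x"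
              using w0 a by (auto split: split_indicator)
          qed
          finally show ?thesis .
        qed
        have conv: "S \<longlonglongrightarrow> Itot"
          unfolding S_def Itot_def set_lebesgue_integral_def
        proof (rule integral_dominated_convergence[where w="\<lambda>x. W x * W x"])
          show "integrable lborel (\<lambda>x. W x * W x)" by (rule W2)
          show "AE x in lborel. (\<lambda>n. indicator {-real n<..real n} x *\<^sub>R (W x * W x)) \<longlonglongrightarrow> W x * W x"
          proof (rule AE_I2)
            fix x
            obtain N :: nat where N: "real N > \<bar>x\<bar>" using reals_Archimedean2 by blast
            have "eventually (\<lambda>n. indicator {-real n<..real n} x *\<^sub>R (W x * W x) = W x * W x) sequentially"
              unfolding eventually_sequentially
            proof (intro exI[of _ N] allI impI)
              fix n assume "N \<le> n"
              then have "real N \<le> real n" by simp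
              then show "indicator {-real n<..real n} x *\<^sub>R (W x * W x) = W x * W x"
                using N by (auto split: split_indicator)
            qed
            then show "(\<lambda>n. indicator {-real n<..real n} x *\<^sub>R (W x * W x)) \<longlonglongrightarrow> W x * W x"
              by (rule tendsto_eventually)
          qed
          fix n :: nat
          show "AE x in lborel. norm (indicator {-real n<..real n} x *\<^sub>R (W x * W x)) \<le> W x * W x"
            by (rule AE_I2) (auto split: split_indicator)
        qed auto
        have bnd8: "\<sigma>\<^sup>2 * Itot \<le> 8 * Mh * e" if e: "e > 0" for e
        proof -
          have ineq: "\<sigma>\<^sup>2 * S (n + 2) \<le> 2*Mh*(4*e + (Itot - S n)/(4*e))" for n
          proof -
            define a where "a = real n + 2"
            have an: "real (n+2) = a" unfolding a_def by simp
            have "\<sigma>\<^sup>2 * S (n + 2) \<le> 2*Mh*(T (-a) + T a)" using Sn[of "n+2"] unfolding an .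
            also have "T (-a) + T a \<le> 4*e + ((LBINT x:{-a-1..-a+1}. W x * W x) + (LBINT x:{a-1..a+1}. W x * W x))/(4*e)"
              using Tb[OF e, of "-a"] Tb[OF e, of a] by (simp add: add_divide_distrib)
            also have "\<dots> \<le> 4*e + (Itot - S n)/(4*e)"
              using disj[OF a_def] e by (intro add_left_mono divide_right_mono) auto
            finally show ?thesis using Mh0 by (simp add: mult_left_mono)
          qed
          have lim1: "(\<lambda>n. \<sigma>\<^sup>2 * S (n + 2)) \<longlonglongrightarrow> \<sigma>\<^sup>2 * Itot"
            by (intro tendsto_mult_left LIMSEQ_ignore_initial_segment[OF conv])
          have lim2: "(\<lambda>n. 2*Mh*(4*e + (Itot - S n)/(4*e))) \<longlonglongrightarrow> 2*Mh*(4*e + (Itot - Itot)/(4*e))"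
            by (intro tendsto_intros conv) (use e in simp)
          have "\<sigma>\<^sup>2 * Itot \<le> 2*Mh*(4*e + (Itot - Itot)/(4*e))"
            by (rule LIMSEQ_le[OF lim1 lim2]) (use ineq in auto)
          then show ?thesis by simp
        qed
        have "Itot \<le> 0"
        proof (rule ccontr)
          assume "\<not> Itot \<le> 0"
          then have ip: "0 < \<sigma>\<^sup>2 * Itot" using s2 by simp
          have "\<sigma>\<^sup>2 * Itot \<le> 8 * Mh * (\<sigma>\<^sup>2 * Itot / (16 * Mh))"
            by (rule bnd8) (use ip Mh0 in simp)
          also have "\<dots> = \<sigma>\<^sup>2 * Itot / 2" using Mh0 by simp
          finally show False using ip by (simp add: mult.commute)
        qed
        then show False using final I unfolding Itot_def set_lebesgue_integral_def by simp
      next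
        case (fin k)
        have I: "IK K = {-k<..k}" using fin unfolding IK_def by simp
        have per: "W (x + 2*k) = W x" for x using X fin unfolding XK_def by simp
        have L0: "0 < 2*k" using fin by simp
        have aper: "avgop W (x + 2*k) = avgop W x" for x by (rule avg_per[of W "2*k", OF per])
        have hper: "h (x + 2*k) = h x" for x unfolding h_def using aper by simp
        have Ahper: "avgop h (x + 2*k) = avgop h x" for x by (rule avg_per[of h "2*k", OF hper])
        define G where "G x = W x * avgop h x" for x
        have Gper: "G (x + 2*k) = G x" for x unfolding G_def using per Ahper by simp
        have Gm[measurable]: "G \<in> borel_measurable borel" unfolding G_def by simp
        have Wk: "set_integrable lborel {-k<..k} W"
          by (rule set_integrable_subset[OF li[of "-k" k]]) auto
        have Gk: "set_integrable lborel {-k<..k} G"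
        proof -
          have "integrable lborel (\<lambda>x. Mh * (indicator {-k<..k} x * \<bar>W x\<bar>))"
            using set_integrable_abs[OF Wk] unfolding set_integrable_def by simp
          then show ?thesis
            unfolding set_integrable_def
          proof (rule Bochner_Integration.integrable_bound)
            show "(\<lambda>x. indicat_real {- k<..k} x *\<^sub>R G x) \<in> borel_measurable lborel" by simp
            show "AE x in lborel. norm (indicat_real {- k<..k} x *\<^sub>R G x) \<le> norm (Mh * (indicat_real {- k<..k} x * \<bar>W x\<bar>))"
            proof (rule AE_I2)
              fix x
              have "\<bar>W x * avgop h x\<bar> \<le> \<bar>W x\<bar> * Mh"
                unfolding abs_mult by (rule mult_left_mono[OF avg_bound[OF hm hb]]) simp
              then show "norm (indicat_real {- k<..k} x *\<^sub>R G x) \<le> norm (Mh * (indicat_real {- k<..k} x * \<bar>W x\<bar>))"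
                unfolding G_def using Mh0 by (auto split: split_indicator simp: abs_mult mult.commute)
            qed
          qed
        qed
        have ek: "-k + 2*k = k" by simp
        have Gk': "set_integrable lborel {-k<..-k + 2*k} G" unfolding ek by (rule Gk)
        define J where "J = (LBINT x:{-k<..k}. W x * W x)"
        have GJ: "(LBINT x:{-k<..k}. G x) = \<sigma>\<^sup>2 * J"
        proof -
          have "(LBINT x:{-k<..k}. G x) = (LBINT x:{-k<..k}. \<sigma>\<^sup>2 * (W x * W x))"
            by (rule set_lebesgue_integral_cong_AE) (use eqA I in \<open>auto simp: G_def\<close>)
          then show ?thesis unfolding J_def by simp
        qed
        define B where "B = 4 * Mh * T (-k)"
        have nb: "real n * (\<sigma>\<^sup>2 * J) \<le> B" for n :: nat
        proof -
          have np: "(LBINT x:{-k<..-k + real n * (2*k)}. G x) = real n * (LBINT x:{-k<..-k + 2*k}. G x)"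
            using nperiod[of G "2*k", OF Gper L0 Gk'] by blast
          have "-k \<le> -k + real n * (2*k)" using fin by simp
          from star[OF this] have st: "(LBINT x:{-k<..-k + real n * (2*k)}. G x) \<le> 2*Mh*(T (-k) + T (-k + real n * (2*k)))"
            unfolding G_def .
          have pn: "\<bar>W (x + real n * (2*k))\<bar> = \<bar>W x\<bar>" for x using per_nat[of W "2*k", OF per] by simp
          have "T (-k + real n * (2*k)) = (LBINT x:{(-k-1) + real n * (2*k)..(-k+1) + real n * (2*k)}. \<bar>W x\<bar>)"
            unfolding T_def by (simp add: algebra_simps)
          also have "\<dots> = T (-k)" unfolding T_def
            by (rule shift_cc[of "\<lambda>x. \<bar>W x\<bar>" "real n * (2*k)", OF pn])
          finally have "T (-k + real n * (2*k)) = T (-k)" .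
          then show ?thesis using st np GJ unfolding ek B_def by (simp add: algebra_simps)
        qed
        have J0: "0 \<le> J" unfolding J_def set_lebesgue_integral_def
          by (rule integral_nonneg_AE) (auto split: split_indicator)
        have "J \<le> 0"
        proof (rule ccontr)
          assume "\<not> J \<le> 0"
          then have Jp: "0 < \<sigma>\<^sup>2 * J" using s2 by simp
          obtain n :: nat where n: "real n > B / (\<sigma>\<^sup>2 * J)" using reals_Archimedean2 by blast
          then have "B < real n * (\<sigma>\<^sup>2 * J)" using Jp by (simp add: pos_divide_less_eq)
          then show False using nb[of n] by simp
        qed
        then show False using final I unfolding J_def by simp
      qed
    qed
  qed
qed



end
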